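(* Let $G=(Q,\Sigma,\delta_G,q_0,Q_m)$ be a DFA, $\Sigma_o$ a subset of $\Sigma$, $H=T_{\Sigma_o}(G)$, let $G'$ be a DFA with $G'\sqsubseteq G$, and $H'=T_{\Sigma_o}(G')$. If $match_{\Sigma_o}\leq\rho_{G,G'}$, then for all $s,s'\in L(H)$ with $s\equiv s'\bmod eq(H)$ we have $s\equiv s'\bmod eq(H')$.
   Context: DFA $G$, $L(G)=\{s:\delta_G(q_0,s)\text{ defined}\}$, natural projection $P_{\Sigma_o}$. $\epsilon R_G(q)=\{\delta_G(q,s):P_{\Sigma_o}(s)=\epsilon\}$. The observer $T_{\Sigma_o}(G)$ is the DFA over $\Sigma_o$ with subset states, initial state $\epsilon R_G(q_0)$, transitions $\delta(B,\sigma)=\bigcup_{q\in B,\ \delta_G(q,\sigma)\text{ defined}}\epsilon R_G(\delta_G(q,\sigma))$ (defined iff nonempty), accessible part. $G'\sqsubseteq G$ means $\delta_{G'}(q'_0,s)=\delta_G(q_0,s)$ for all $s\in L(G')$. For a DFA $K$ with initial state $k_0$, $eq(K)$ relates $s,s'$ iff $\delta_K(k_0,s)=\delta_K(k_0,s')$, both being undefined counting as equal. $match_{\Sigma_o}$ on $\Sigma^*$: $(s,s')\in match_{\Sigma_o}$ iff $s\equiv s'\bmod eq(G)$ and $P_{\Sigma_o}(s)\equiv P_{\Sigma_o}(s')\bmod eq(H)$, and if $s\notin L(G)$ then $(s,s')\in match_{\Sigma_o}$ iff $s'\notin L(G)$. $\rho_{G,G'}$ on $\Sigma^*$: $(s,s')\in\rho_{G,G'}$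 iff both lie in $L(G')$, or both lie in $L(G)\setminus L(G')$, or both lie in $\Sigma^*\setminus L(G)$. For binary relations $\rho_1,\rho_2$ on a set $X$, $\rho_1\leq\rho_2$ means $(x,y)\in\rho_1\Rightarrow(x,y)\in\rho_2$ for all $x,y$. *)

theory Defs
  imports Main
begin

record ('s, 'a) dfa =
  states :: "'s set"
  trans  :: "'s \<Rightarrow> 'a \<Rightarrow> 's option"
  init   :: "'s"
  marked :: "'s set"

definition is_dfa :: "('s, 'a) dfa \<Rightarrow> bool" where
  "is_dfa G \<longleftrightarrow> finite (states G) \<and> init G \<in> states G \<and> marked G \<subseteq> states G \<and>
     (\<forall>q\<in>states G. \<forall>\<sigma> q'. trans G q \<sigma> = Some q' \<longrightarrow> q' \<in> states G)"

fun delta_ext :: "('s, 'a) dfa \<Rightarrow> 's \<Rightarrow> 'a list \<Rightarrow> 's option" where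
  "delta_ext G q [] = Some q"
| "delta_ext G q (a # s) = (case trans G q a of None \<Rightarrow> None | Some q' \<Rightarrow> delta_ext G q' s)"

definition lang :: "('s, 'a) dfa \<Rightarrow> 'a list set" where
  "lang G = {s. delta_ext G (init G) s \<noteq> None}"

definition proj :: "'a set \<Rightarrow> 'a list \<Rightarrow> 'a list" where
  "proj \<Sigma>o s = filter (\<lambda>a. a \<in> \<Sigma>o) s"

definition epsR :: "('s, 'a) dfa \<Rightarrow> 'a set \<Rightarrow> 's \<Rightarrow> 's set" where
  "epsR G \<Sigma>o q = {q'. \<exists>s. proj \<Sigma>o s = [] \<and> delta_ext G q s = Some q'}"

definition obs_step :: "('s, 'a) dfa \<Rightarrow> 'a set \<Rightarrow> 's set \<Rightarrow> 'a \<Rightarrow> 's set option" where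
  "obs_step G \<Sigma>o B \<sigma> =
     (let B' = (\<Union>q\<in>{q\<in>B. trans G q \<sigma> \<noteq> None}. epsR G \<Sigma>o (the (trans G q \<sigma>)))
      in if \<sigma> \<in> \<Sigma>o \<and> B' \<noteq> {} then Some B' else None)"

definition obs_full :: "('s, 'a) dfa \<Rightarrow> 'a set \<Rightarrow> ('s set, 'a) dfa" where
  "obs_full G \<Sigma>o = \<lparr> states = UNIV, trans = obs_step G \<Sigma>o, init = epsR G \<Sigma>o (init G),
      marked = {B. B \<inter> marked G \<noteq> {}} \<rparr>"

definition obs_acc :: "('s, 'a) dfa \<Rightarrow> 'a set \<Rightarrow> 's set set" where
  "obs_acc G \<Sigma>o = {B. \<exists>t. delta_ext (obs_full G \<Sigma>o) (epsR G \<Sigma>o (init G)) t = Some B}"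

definition observer :: "'a set \<Rightarrow> ('s, 'a) dfa \<Rightarrow> ('s set, 'a) dfa" where
  "observer \<Sigma>o G = \<lparr> states = obs_acc G \<Sigma>o,
      trans = (\<lambda>B \<sigma>. if B \<in> obs_acc G \<Sigma>o then obs_step G \<Sigma>o B \<sigma> else None),
      init = epsR G \<Sigma>o (init G),
      marked = {B \<in> obs_acc G \<Sigma>o. B \<inter> marked G \<noteq> {}} \<rparr>"

definition subautomaton :: "('s, 'a) dfa \<Rightarrow> ('s, 'a) dfa \<Rightarrow> bool" where
  "subautomaton G' G \<longleftrightarrow> (\<forall>s\<in>lang G'. delta_ext G' (init G') s = delta_ext G (init G) s)"

text \<open>eq(K): both undefined counts as equal (None = None).\<close>
definition eqK :: "('s, 'a) dfa \<Rightarrow> 'a list \<Rightarrow> 'a list \<Rightarrow> bool" where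
  "eqK K s s' \<longleftrightarrow> delta_ext K (init K) s = delta_ext K (init K) s'"

definition match :: "'a set \<Rightarrow> ('s, 'a) dfa \<Rightarrow> 'a list \<Rightarrow> 'a list \<Rightarrow> bool" where
  "match \<Sigma>o G s s' \<longleftrightarrow>
     (if s \<in> lang G then eqK G s s' \<and> eqK (observer \<Sigma>o G) (proj \<Sigma>o s) (proj \<Sigma>o s')
      else s' \<notin> lang G)"

definition rho :: "('s, 'a) dfa \<Rightarrow> ('s, 'a) dfa \<Rightarrow> 'a list \<Rightarrow> 'a list \<Rightarrow> bool" where
  "rho G G' s s' \<longleftrightarrow>
     (s \<in> lang G' \<and> s' \<in> lang G') \<or>
     (s \<in> lang G - lang G' \<and> s' \<in> lang G - lang G') \<or>
     (s \<notin> lang G \<and> s' \<notin> lang G)"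

end

theory Submission
  imports Defs
begin

lemma delta_ext_append:
  "delta_ext G q (u @ v) = (case delta_ext G q u of None \<Rightarrow> None | Some q' \<Rightarrow> delta_ext G q' v)"
  by (induction u arbitrary: q) (auto split: option.splits)

definition R :: "('s, 'a) dfa \<Rightarrow> 'a set \<Rightarrow> 'a list \<Rightarrow> 's set" where
  "R G S t = {q. \<exists>w. proj S w = t \<and> delta_ext G (init G) w = Some q}"

lemma proj_decomp:
  "proj S w = t @ [a] \<Longrightarrow> \<exists>u v. w = u @ a # v \<and> proj S u = t \<and> proj S v = [] \<and> a \<in> S"
proof (induction w arbitrary: t)
  case Nil
  then show ?case by (simp add: proj_def)
next
  case (Cons x w)
  show ?case
  proof (cases "x \<in> S")
    case False
    then have "proj S w = t @ [a]" using Cons.prems by (simp add: proj_def)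
    from Cons.IH[OF this] obtain u v where "w = u @ a # v \<and> proj S u = t \<and> proj S v = [] \<and> a \<in> S" by blast
    then show ?thesis using False by (intro exI[of _ "x # u"] exI[of _ v]) (simp add: proj_def)
  next
    case True
    show ?thesis
    proof (cases t)
      case Nil
      then show ?thesis using True Cons.prems
        by (intro exI[of _ "[]"] exI[of _ w]) (auto simp add: proj_def)
    next
      case (Cons y t')
      then have "proj S w = t' @ [a]" "x = y" using Cons.prems True by (auto simp add: proj_def)
      from Cons.IH[OF this(1)] obtain u v where "w = u @ a # v \<and> proj S u = t' \<and> proj S v = [] \<and> a \<in> S" by blast
      then show ?thesis using True \<open>x = y\<close> Cons by (intro exI[of _ "x # u"] exI[of _ v]) (simp add: proj_def)
    qed
  qed
qed

lemma proj_append: "proj S (u @ v) = proj S u @ proj S v"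
  by (simp add: proj_def)

lemma R_nil: "R G S [] = epsR G S (init G)"
  by (simp add: R_def epsR_def)

lemma init_R: "init G \<in> R G S []"
  by (auto simp: R_def proj_def intro: exI[of _ "[]"])

lemma R_snoc_empty: "R G S t = {} \<Longrightarrow> R G S (t @ [a]) = {}"
proof (rule ccontr)
  assume e: "R G S t = {}" and "R G S (t @ [a]) \<noteq> {}"
  then obtain q w where w: "proj S w = t @ [a]" "delta_ext G (init G) w = Some q" by (auto simp: R_def)
  from proj_decomp[OF w(1)] obtain u v where uv: "w = u @ a # v" "proj S u = t" by blast
  then obtain q' where "delta_ext G (init G) u = Some q'"
    using w(2) by (auto simp: delta_ext_append split: option.splits)
  then have "q' \<in> R G S t" using uv by (auto simp: R_def)
  then show False using e by auto
qed

lemma R_snoc_notin: "a \<notin> S \<Longrightarrow> R G S (t @ [a]) = {}"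
  using proj_decomp unfolding R_def by fastforce

lemma R_snoc_in:
  assumes "a \<in> S"
  shows "(\<Union>q\<in>{q\<in>R G S t. trans G q a \<noteq> None}. epsR G S (the (trans G q a))) = R G S (t @ [a])"
proof
  show "(\<Union>q\<in>{q\<in>R G S t. trans G q a \<noteq> None}. epsR G S (the (trans G q a))) \<subseteq> R G S (t @ [a])"
  proof
    fix x assume "x \<in> (\<Union>q\<in>{q\<in>R G S t. trans G q a \<noteq> None}. epsR G S (the (trans G q a)))"
    then obtain q p u v where q: "proj S u = t" "delta_ext G (init G) u = Some q"
      "trans G q a = Some p" "proj S v = []" "delta_ext G p v = Some x"
      by (auto simp: R_def epsR_def)
    then have "proj S (u @ a # v) = t @ [a]" "delta_ext G (init G) (u @ a # v) = Some x"
      using assms by (auto simp: proj_def delta_ext_append)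
    then show "x \<in> R G S (t @ [a])" by (auto simp: R_def)
  qed
next
  show "R G S (t @ [a]) \<subseteq> (\<Union>q\<in>{q\<in>R G S t. trans G q a \<noteq> None}. epsR G S (the (trans G q a)))"
  proof
    fix x assume "x \<in> R G S (t @ [a])"
    then obtain w where w: "proj S w = t @ [a]" "delta_ext G (init G) w = Some x" by (auto simp: R_def)
    from proj_decomp[OF w(1)] obtain u v where uv: "w = u @ a # v" "proj S u = t" "proj S v = []" by blast
    then obtain q where q: "delta_ext G (init G) u = Some q"
      using w(2) by (auto simp: delta_ext_append split: option.splits)
    then obtain p where p: "trans G q a = Some p" "delta_ext G p v = Some x"
      using w(2) uv by (auto simp: delta_ext_append split: option.splits)
    have "q \<in> R G S t" using q uv by (auto simp: R_def)
    moreover have "x \<in> epsR G S p" using p uv by (auto simp: epsR_def)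
    ultimately show "x \<in> (\<Union>q\<in>{q\<in>R G S t. trans G q a \<noteq> None}. epsR G S (the (trans G q a)))"
      using p by force
  qed
qed

lemma full_char:
  "delta_ext (obs_full G S) (epsR G S (init G)) t = (if R G S t = {} then None else Some (R G S t))"
proof (induction t rule: rev_induct)
  case Nil
  then show ?case using init_R[of G S] by (auto simp: R_nil)
next
  case (snoc a t)
  show ?case
  proof (cases "R G S t = {}")
    case True
    then show ?thesis using snoc R_snoc_empty[OF True] by (simp add: delta_ext_append)
  next
    case False
    then have "delta_ext (obs_full G S) (epsR G S (init G)) (t @ [a]) = obs_step G S (R G S t) a"
      using snoc by (simp add: delta_ext_append obs_full_def split: option.split)
    also have "\<dots> = (if R G S (t @ [a]) = {} then None else Some (R G S (t @ [a])))"
      using R_snoc_in[of a S G t] R_snoc_notin[of a S G t] by (cases "a \<in> S") (simp_all add: obs_step_def Let_def)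
    finally show ?thesis .
  qed
qed

lemma obs_char:
  "delta_ext (observer S G) (init (observer S G)) t = (if R G S t = {} then None else Some (R G S t))"
proof -
  have "delta_ext (observer S G) (epsR G S (init G)) t = delta_ext (obs_full G S) (epsR G S (init G)) t"
  proof (induction t rule: rev_induct)
    case Nil
    then show ?case by simp
  next
    case (snoc a t)
    show ?case
    proof (cases "delta_ext (obs_full G S) (epsR G S (init G)) t")
      case None
      then show ?thesis using snoc by (simp add: delta_ext_append)
    next
      case (Some B)
      then have "B \<in> obs_acc G S" by (auto simp: obs_acc_def)
      then show ?thesis using snoc Some by (simp add: delta_ext_append observer_def obs_full_def split: option.split)
    qed
  qed
  then show ?thesis using full_char[of G S t] by (simp add: observer_def)
qed

theorem lemma5:
  fixes G G' :: "('s, 'a) dfa" and \<Sigma>o :: "'a set"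
  assumes "is_dfa G" and "is_dfa G'"
    and "subautomaton G' G"
    and "match \<Sigma>o G \<le> rho G G'"
    and "s \<in> lang (observer \<Sigma>o G)" and "s' \<in> lang (observer \<Sigma>o G)"
    and "eqK (observer \<Sigma>o G) s s'"
  shows "eqK (observer \<Sigma>o G') s s'"
proof -
  have eqR: "R G \<Sigma>o s = R G \<Sigma>o s'"
    using assms(7) unfolding eqK_def obs_char by (auto split: if_splits)
  have key: "R G' \<Sigma>o x \<subseteq> R G' \<Sigma>o y" if xy: "R G \<Sigma>o x = R G \<Sigma>o y" for x y
  proof
    fix q assume "q \<in> R G' \<Sigma>o x"
    then obtain w where w: "proj \<Sigma>o w = x" "delta_ext G' (init G') w = Some q" by (auto simp: R_def)
    then have wl: "w \<in> lang G'" by (simp add: lang_def)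
    then have wg: "delta_ext G (init G) w = Some q" using assms(3) w by (simp add: subautomaton_def)
    then have "q \<in> R G \<Sigma>o y" using xy w by (auto simp: R_def)
    then obtain w' where w': "proj \<Sigma>o w' = y" "delta_ext G (init G) w' = Some q" by (auto simp: R_def)
    have "match \<Sigma>o G w w'"
      unfolding match_def eqK_def obs_char using wg w' w xy by (simp add: lang_def)
    then have "rho G G' w w'" using assms(4) by (simp add: le_fun_def)
    then have "w' \<in> lang G'" using wl wg by (auto simp: rho_def lang_def)
    then have "delta_ext G' (init G') w' = Some q" using assms(3) w' by (simp add: subautomaton_def)
    then show "q \<in> R G' \<Sigma>o y" using w' by (auto simp: R_def)
  qed
  have "R G' \<Sigma>o s = R G' \<Sigma>o s'" using key[OF eqR] key[OF eqR[symmetric]] by blast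
  then show ?thesis unfolding eqK_def obs_char by simp
qed

end
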